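(* There exists a recursive subset $J\subseteq\bigoplus_{\mathbb Z}\mathbb Z$ with $\mathbf 0\notin J$ and $J=-J$ such that the following problem is undecidable: given a finite subset $X\subseteq\bigoplus_{\mathbb Z}\mathbb Z$, decide whether there exists $g\in\bigoplus_{\mathbb Z}\mathbb Z$ such that $|(X-g)\cap J|$ is odd.
   Context: $\bigoplus_{\mathbb Z}\mathbb Z$ denotes the group of finitely supported integer sequences $(x_i)_{i\in\mathbb Z}$ under addition; $X-g=\{x-g: x\in X\}$. *)

theory Defs
  imports Main "HOL-Library.Poly_Mapping" "HOL-Library.Nat_Bijection"
begin

datatype recf =
    Zf
  | Sf
  | Idf nat
  | Cnf recf "recf list"
  | Prf recf recf
  | Mnf recf

inductive eval_recf :: "recf \<Rightarrow> nat list \<Rightarrow> nat \<Rightarrow> bool" where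
  zero: "eval_recf Zf xs 0"
| succ: "eval_recf Sf (x # xs) (Suc x)"
| proj: "i < length xs \<Longrightarrow> eval_recf (Idf i) xs (xs ! i)"
| comp: "list_all2 (\<lambda>g y. eval_recf g xs y) gs ys \<Longrightarrow> eval_recf f ys y
         \<Longrightarrow> eval_recf (Cnf f gs) xs y"
| pr0: "eval_recf f xs y \<Longrightarrow> eval_recf (Prf f g) (0 # xs) y"
| prS: "eval_recf (Prf f g) (n # xs) r \<Longrightarrow> eval_recf g (n # r # xs) y
         \<Longrightarrow> eval_recf (Prf f g) (Suc n # xs) y"
| mn: "eval_recf f (n # xs) 0 \<Longrightarrow> (\<forall>m<n. \<exists>k. eval_recf f (m # xs) (Suc k))
         \<Longrightarrow> eval_recf (Mnf f) xs n"

definition recursive_set :: "nat set \<Rightarrow> bool" where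
  "recursive_set A \<longleftrightarrow>
     (\<exists>f. \<forall>n. eval_recf f [n] (if n \<in> A then 1 else 0))"

text \<open>Elements of the direct sum of countably many copies of Z indexed by Z are
  modelled by the type (int, int) poly_mapping. This decoding is
  surjective and effective.\<close>

definition decode_elem :: "nat \<Rightarrow> (int \<Rightarrow>\<^sub>0 int)" where
  "decode_elem n = sum_list (map (\<lambda>a. case prod_decode a of (i, v) \<Rightarrow>
       Poly_Mapping.single (int_decode i) (int_decode v)) (list_decode n))"

definition decode_fset :: "nat \<Rightarrow> (int \<Rightarrow>\<^sub>0 int) set" where
  "decode_fset n = decode_elem ` set (list_decode n)"

end

theory Submission
  imports Defs
begin



definition pad :: "nat \<Rightarrow> nat list \<Rightarrow> nat \<Rightarrow> nat" where
  "pad n xs = (\<lambda>i. if i < n then xs ! i else 0)"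

definition cmp :: "nat \<Rightarrow> ((nat \<Rightarrow> nat) \<Rightarrow> nat) \<Rightarrow> bool" where
  "cmp n F \<longleftrightarrow> (\<exists>r. \<forall>xs. length xs = n \<longrightarrow> eval_recf r xs (F (pad n xs)))"

definition cmpP :: "nat \<Rightarrow> ((nat \<Rightarrow> nat) \<Rightarrow> bool) \<Rightarrow> bool" where
  "cmpP n P \<longleftrightarrow> cmp n (\<lambda>v. if P v then 1 else 0)"

lemma cmp_zero: "cmp n (\<lambda>v. 0)"
  unfolding cmp_def by (rule exI[of _ Zf]) (auto intro: eval_recf.zero)

lemma cmp_var: "i < n \<Longrightarrow> cmp n (\<lambda>v. v i)"
  unfolding cmp_def pad_def by (rule exI[of _ "Idf i"]) (auto intro: eval_recf.proj)

lemma cmp_Suc: "cmp n A \<Longrightarrow> cmp n (\<lambda>v. Suc (A v))"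
  unfolding cmp_def
proof (elim exE)
  fix r assume r: "\<forall>xs. length xs = n \<longrightarrow> eval_recf r xs (A (pad n xs))"
  show "\<exists>r. \<forall>xs. length xs = n \<longrightarrow> eval_recf r xs (Suc (A (pad n xs)))"
    apply (rule exI[of _ "Cnf Sf [r]"])
    using r by (auto intro!: eval_recf.comp[where ys="[A (pad n _)]"] eval_recf.succ)
qed

lemma cmp_const: "cmp n (\<lambda>v. c)"
  by (induction c) (auto intro: cmp_zero cmp_Suc)

lemma cmp_list_ex:
  assumes "\<forall>G\<in>set Gs. cmp n G"
  shows "\<exists>rs. list_all2 (\<lambda>r G. \<forall>xs. length xs = n \<longrightarrow> eval_recf r xs (G (pad n xs))) rs Gs"
  using assms
proof (induction Gs)
  case Nil then show ?case by auto
next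
  case (Cons G Gs)
  then obtain rs where rs: "list_all2 (\<lambda>r G. \<forall>xs. length xs = n \<longrightarrow> eval_recf r xs (G (pad n xs))) rs Gs" by auto
  from Cons obtain r where "\<forall>xs. length xs = n \<longrightarrow> eval_recf r xs (G (pad n xs))" unfolding cmp_def by auto
  then show ?case using rs by (intro exI[of _ "r # rs"]) auto
qed

lemma cmp_compose:
  assumes F: "cmp m F" and len: "length Gs = m" and G: "\<forall>G\<in>set Gs. cmp n G"
  shows "cmp n (\<lambda>v. F (pad m (map (\<lambda>G. G v) Gs)))"
proof -
  obtain rf where rf: "\<forall>xs. length xs = m \<longrightarrow> eval_recf rf xs (F (pad m xs))" using F cmp_def by auto
  obtain rs where rs: "list_all2 (\<lambda>r G. \<forall>xs. length xs = n \<longrightarrow> eval_recf r xs (G (pad n xs))) rs Gs"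
    using cmp_list_ex[OF G] by auto
  show ?thesis unfolding cmp_def
  proof (intro exI allI impI)
    fix xs :: "nat list" assume xs: "length xs = n"
    have "list_all2 (\<lambda>g y. eval_recf g xs y) rs (map (\<lambda>G. G (pad n xs)) Gs)"
      using rs xs by (auto simp: list_all2_conv_all_nth)
    moreover have "eval_recf rf (map (\<lambda>G. G (pad n xs)) Gs) (F (pad m (map (\<lambda>G. G (pad n xs)) Gs)))"
      using rf len by auto
    ultimately show "eval_recf (Cnf rf rs) xs (F (pad m (map (\<lambda>G. G (pad n xs)) Gs)))"
      by (rule eval_recf.comp)
  qed
qed

lemma cmp_compose1:
  assumes "cmp 1 (\<lambda>v. f (v 0))" "cmp n A"
  shows "cmp n (\<lambda>v. f (A v))"
  using cmp_compose[OF assms(1), of "[A]" n] assms(2) by (simp add: pad_def)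

lemma cmp_compose2:
  assumes "cmp 2 (\<lambda>v. f (v 0) (v 1))" "cmp n A" "cmp n B"
  shows "cmp n (\<lambda>v. f (A v) (B v))"
  using cmp_compose[OF assms(1), of "[A,B]" n] assms(2,3) by (simp add: pad_def)

lemma cmp_let:
  assumes A: "cmp n A" and F: "cmp (Suc n) (\<lambda>v. F (v 0) (\<lambda>i. v (Suc i)))"
  shows "cmp n (\<lambda>v. F (A v) v)"
proof -
  obtain ra where ra: "\<forall>xs. length xs = n \<longrightarrow> eval_recf ra xs (A (pad n xs))" using A cmp_def by auto
  obtain rf where rf: "\<forall>xs. length xs = Suc n \<longrightarrow> eval_recf rf xs (F (pad (Suc n) xs 0) (\<lambda>i. pad (Suc n) xs (Suc i)))"
    using F cmp_def by auto
  show ?thesis unfolding cmp_def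
  proof (intro exI allI impI)
    fix xs :: "nat list" assume xs: "length xs = n"
    let ?ys = "A (pad n xs) # xs"
    have "list_all2 (\<lambda>g y. eval_recf g xs y) (ra # map Idf [0..<n]) ?ys"
      using ra xs by (auto simp: list_all2_conv_all_nth nth_Cons' intro: eval_recf.proj)
    moreover have "eval_recf rf ?ys (F (A (pad n xs)) (pad n xs))"
    proof -
      have "(\<lambda>i. pad (Suc n) ?ys (Suc i)) = pad n xs" by (auto simp: pad_def)
      moreover have "pad (Suc n) ?ys 0 = A (pad n xs)" by (simp add: pad_def)
      ultimately show ?thesis using rf[rule_format, of ?ys] xs by simp
    qed
    ultimately show "eval_recf (Cnf rf (ra # map Idf [0..<n])) xs (F (A (pad n xs)) (pad n xs))"
      by (rule eval_recf.comp)
  qed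
qed

lemma cmp_weaken:
  assumes F: "cmp (Suc n) (\<lambda>v. F (v 0) (\<lambda>i. v (Suc i)))"
  shows "cmp (Suc (Suc n)) (\<lambda>v. F (v 0) (\<lambda>i. v (Suc (Suc i))))"
proof -
  obtain rf where rf: "\<forall>xs. length xs = Suc n \<longrightarrow> eval_recf rf xs (F (pad (Suc n) xs 0) (\<lambda>i. pad (Suc n) xs (Suc i)))"
    using F cmp_def by auto
  show ?thesis unfolding cmp_def
  proof (intro exI allI impI)
    fix xs :: "nat list" assume xs: "length xs = Suc (Suc n)"
    let ?ys = "xs ! 0 # drop 2 xs"
    have "list_all2 (\<lambda>g y. eval_recf g xs y) (Idf 0 # map (\<lambda>i. Idf (i+2)) [0..<n]) ?ys"
      unfolding list_all2_conv_all_nth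
    proof (intro conjI allI impI)
      fix i assume i: "i < length (Idf 0 # map (\<lambda>i. Idf (i+2)) [0..<n])"
      show "eval_recf ((Idf 0 # map (\<lambda>i. Idf (i+2)) [0..<n]) ! i) xs (?ys ! i)"
      proof (cases i)
        case 0 then show ?thesis using xs by (auto intro: eval_recf.proj)
      next
        case (Suc j)
        then have "j < n" using i by simp
        then have "eval_recf (Idf (j+2)) xs (xs ! (j+2))" using xs by (intro eval_recf.proj) auto
        then show ?thesis using Suc \<open>j < n\<close> xs by (simp add: add.commute)
      qed
    qed (use xs in simp)
    moreover have "eval_recf rf ?ys (F (pad (Suc (Suc n)) xs 0) (\<lambda>i. pad (Suc (Suc n)) xs (Suc (Suc i))))"
    proof -
      have "(\<lambda>i. pad (Suc n) ?ys (Suc i)) = (\<lambda>i. pad (Suc (Suc n)) xs (Suc (Suc i)))"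
        using xs by (auto simp: pad_def)
      moreover have "pad (Suc n) ?ys 0 = pad (Suc (Suc n)) xs 0" by (simp add: pad_def)
      ultimately show ?thesis using rf[rule_format, of ?ys] xs by simp
    qed
    ultimately show "eval_recf (Cnf rf (Idf 0 # map (\<lambda>i. Idf (i+2)) [0..<n])) xs (F (pad (Suc (Suc n)) xs 0) (\<lambda>i. pad (Suc (Suc n)) xs (Suc (Suc i))))"
      by (rule eval_recf.comp)
  qed
qed

lemma cmp_prim:
  assumes B: "cmp n B" and S: "cmp (Suc (Suc n)) (\<lambda>v. S (v 0) (v 1) (\<lambda>i. v (Suc (Suc i))))"
  shows "cmp (Suc n) (\<lambda>v. rec_nat (B (\<lambda>i. v (Suc i))) (\<lambda>k r. S k r (\<lambda>i. v (Suc i))) (v 0))"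
proof -
  obtain rb where rb: "\<forall>xs. length xs = n \<longrightarrow> eval_recf rb xs (B (pad n xs))" using B cmp_def by auto
  obtain rs where rs: "\<forall>xs. length xs = Suc (Suc n) \<longrightarrow> eval_recf rs xs (S (pad (Suc (Suc n)) xs 0) (pad (Suc (Suc n)) xs 1) (\<lambda>i. pad (Suc (Suc n)) xs (Suc (Suc i))))"
    using S cmp_def by auto
  have main: "eval_recf (Prf rb rs) (k # xs) (rec_nat (B (pad n xs)) (\<lambda>k r. S k r (pad n xs)) k)"
    if xs: "length xs = n" for k xs
  proof (induction k)
    case 0 then show ?case using rb xs by (auto intro: eval_recf.pr0)
  next
    case (Suc k)
    let ?r = "rec_nat (B (pad n xs)) (\<lambda>k r. S k r (pad n xs)) k"
    have "(\<lambda>i. pad (Suc (Suc n)) (k # ?r # xs) (Suc (Suc i))) = pad n xs" by (auto simp: pad_def)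
    then have "eval_recf rs (k # ?r # xs) (S k ?r (pad n xs))"
      using rs[rule_format, of "k # ?r # xs"] xs by (simp add: pad_def)
    then show ?case using Suc by (auto intro: eval_recf.prS)
  qed
  show ?thesis unfolding cmp_def
  proof (intro exI allI impI)
    fix xs :: "nat list" assume xs: "length xs = Suc n"
    then obtain k ys where xs': "xs = k # ys" "length ys = n" by (cases xs) auto
    have "(\<lambda>i. pad (Suc n) xs (Suc i)) = pad n ys" using xs' by (auto simp: pad_def)
    moreover have "pad (Suc n) xs 0 = k" using xs' by (simp add: pad_def)
    ultimately show "eval_recf (Prf rb rs) xs (rec_nat (B (\<lambda>i. pad (Suc n) xs (Suc i))) (\<lambda>k r. S k r (\<lambda>i. pad (Suc n) xs (Suc i))) (pad (Suc n) xs 0))"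
      using main[OF xs'(2), of k] xs' by simp
  qed
qed

lemma cmp_rec:
  assumes "cmp n K" "cmp n B" "cmp (Suc (Suc n)) (\<lambda>v. S (v 0) (v 1) (\<lambda>i. v (Suc (Suc i))))"
  shows "cmp n (\<lambda>v. rec_nat (B v) (\<lambda>k r. S k r v) (K v))"
  using cmp_let[OF assms(1), of "\<lambda>k w. rec_nat (B w) (\<lambda>k r. S k r w) k"] cmp_prim[OF assms(2,3)]
  by simp

lemma cmp_mn:
  assumes F: "cmp (Suc n) (\<lambda>v. F (v 0) (\<lambda>i. v (Suc i)))" and ex: "\<And>v. \<exists>m. F m v = 0"
  shows "cmp n (\<lambda>v. LEAST m. F m v = 0)"
proof -
  obtain rf where rf: "\<forall>xs. length xs = Suc n \<longrightarrow> eval_recf rf xs (F (pad (Suc n) xs 0) (\<lambda>i. pad (Suc n) xs (Suc i)))"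
    using F cmp_def by auto
  have rf': "eval_recf rf (m # xs) (F m (pad n xs))" if "length xs = n" for m xs
  proof -
    have "(\<lambda>i. pad (Suc n) (m # xs) (Suc i)) = pad n xs" by (auto simp: pad_def)
    then show ?thesis using rf[rule_format, of "m # xs"] that by (simp add: pad_def)
  qed
  show ?thesis unfolding cmp_def
  proof (intro exI allI impI)
    fix xs :: "nat list" assume xs: "length xs = n"
    let ?m = "LEAST m. F m (pad n xs) = 0"
    have "F ?m (pad n xs) = 0" using ex by (rule LeastI_ex)
    moreover have "\<forall>m<?m. \<exists>k. F m (pad n xs) = Suc k"
      using not_less_Least not0_implies_Suc by blast
    ultimately show "eval_recf (Mnf rf) xs ?m"
      using rf'[OF xs] by (metis eval_recf.mn)
  qed
qed

lemma cmp_cong_pad: "cmp n F \<Longrightarrow> (\<And>xs. length xs = n \<Longrightarrow> F (pad n xs) = G (pad n xs)) \<Longrightarrow> cmp n G"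
  unfolding cmp_def by metis

lemma cmp_shift: assumes "cmp n A" shows "cmp (Suc n) (\<lambda>v. A (\<lambda>i. v (Suc i)))"
proof -
  have "cmp (Suc n) (\<lambda>v. A (pad n (map (\<lambda>G. G v) (map (\<lambda>i v. v (Suc i)) [0..<n]))))"
    by (rule cmp_compose[OF assms]) (auto intro: cmp_var)
  then show ?thesis
  proof (rule cmp_cong_pad)
    fix xs :: "nat list" assume "length xs = Suc n"
    have "pad n (map (\<lambda>G. G (pad (Suc n) xs)) (map (\<lambda>i v. v (Suc i)) [0..<n])) = (\<lambda>i. pad (Suc n) xs (Suc i))"
      by (auto simp: pad_def)
    then show "A (pad n (map (\<lambda>G. G (pad (Suc n) xs)) (map (\<lambda>i v. v (Suc i)) [0..<n]))) = A (\<lambda>i. pad (Suc n) xs (Suc i))"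
      by simp
  qed
qed

lemma cmp_cong: "cmp n F \<Longrightarrow> (\<And>v. F v = G v) \<Longrightarrow> cmp n G"
proof -
  assume "cmp n F" "\<And>v. F v = G v"
  then have "F = G" by auto
  with \<open>cmp n F\<close> show ?thesis by simp
qed




named_theorems ci
declare cmp_const [ci] cmp_var [ci] cmp_Suc [ci]

lemma rec_add: "rec_nat a (\<lambda>k r. Suc r) b = b + a" by (induction b) auto
lemma rec_mult: "rec_nat 0 (\<lambda>k r. r + a) b = b * a" by (induction b) auto
lemma rec_pred: "rec_nat 0 (\<lambda>k r. k) b = b - 1" by (induction b) auto
lemma rec_diff: "rec_nat a (\<lambda>k r. r - Suc 0) b = a - b" by (induction b) auto

lemma cmp_add2: "cmp 2 (\<lambda>v. v 0 + v 1)"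
proof -
  have "cmp 2 (\<lambda>v. rec_nat (v 1) (\<lambda>k r. Suc r) (v 0))"
    by (rule cmp_rec) (intro ci; simp)+
  then show ?thesis by (rule cmp_cong) (simp add: rec_add)
qed

lemma cmp_add [ci]: assumes "cmp n A" "cmp n B" shows "cmp n (\<lambda>v. A v + B v)"
  by (rule cmp_compose2[OF cmp_add2 assms])

lemma cmp_mult2: "cmp 2 (\<lambda>v. v 0 * v 1)"
proof -
  have "cmp 2 (\<lambda>v. rec_nat 0 (\<lambda>k r. r + v 1) (v 0))"
    by (rule cmp_rec) (intro ci; simp)+
  then show ?thesis by (rule cmp_cong) (simp add: rec_mult)
qed

lemma cmp_mult [ci]: assumes "cmp n A" "cmp n B" shows "cmp n (\<lambda>v. A v * B v)"
  by (rule cmp_compose2[OF cmp_mult2 assms])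

lemma cmp_pred1: "cmp 1 (\<lambda>v. v 0 - 1)"
proof -
  have "cmp 1 (\<lambda>v. rec_nat 0 (\<lambda>k r. k) (v 0))"
    by (rule cmp_rec) (intro ci; simp)+
  then show ?thesis by (rule cmp_cong) (simp add: rec_pred)
qed

lemma cmp_pred: "cmp n A \<Longrightarrow> cmp n (\<lambda>v. A v - 1)"
  by (rule cmp_compose1[OF cmp_pred1])

lemma cmp_diff2: "cmp 2 (\<lambda>v. v 0 - v 1)"
proof -
  have "cmp 2 (\<lambda>v. rec_nat (v 0) (\<lambda>k r. r - 1) (v 1))"
    by (rule cmp_rec) (intro ci cmp_pred; simp)+
  then show ?thesis by (rule cmp_cong) (simp add: rec_diff)
qed

lemma cmp_diff [ci]: assumes "cmp n A" "cmp n B" shows "cmp n (\<lambda>v. A v - B v)"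
  by (rule cmp_compose2[OF cmp_diff2 assms])

lemma cmpP_le [ci]: assumes "cmp n A" "cmp n B" shows "cmpP n (\<lambda>v. A v \<le> B v)"
  unfolding cmpP_def
  by (rule cmp_cong[where F="\<lambda>v. 1 - (A v - B v)"]) (intro ci assms, simp)

lemma cmpP_less [ci]: assumes "cmp n A" "cmp n B" shows "cmpP n (\<lambda>v. A v < B v)"
  unfolding cmpP_def
  by (rule cmp_cong[where F="\<lambda>v. 1 - (Suc (A v) - B v)"]) (intro ci assms, simp)

lemma cmpP_not [ci]: assumes "cmpP n P" shows "cmpP n (\<lambda>v. \<not> P v)"
  using assms unfolding cmpP_def
  by - (rule cmp_cong[where F="\<lambda>v. 1 - (if P v then 1 else 0)"], intro ci, assumption, simp)

lemma cmpP_and [ci]: assumes "cmpP n P" "cmpP n Q" shows "cmpP n (\<lambda>v. P v \<and> Q v)"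
  using assms unfolding cmpP_def
  by - (rule cmp_cong[where F="\<lambda>v. (if P v then 1 else 0) * (if Q v then 1 else 0)"], intro ci, assumption+, simp)

lemma cmpP_or [ci]: assumes "cmpP n P" "cmpP n Q" shows "cmpP n (\<lambda>v. P v \<or> Q v)"
  using assms unfolding cmpP_def
  by - (rule cmp_cong[where F="\<lambda>v. 1 - (1 - (if P v then 1 else 0)) * (1 - (if Q v then 1 else 0))"], intro ci, assumption+, simp)

lemma cmpP_imp [ci]: assumes "cmpP n P" "cmpP n Q" shows "cmpP n (\<lambda>v. P v \<longrightarrow> Q v)"
  using assms unfolding cmpP_def
  by - (rule cmp_cong[where F="\<lambda>v. 1 - (if P v then 1 else 0) * (1 - (if Q v then 1 else 0))"], intro ci, assumption+, simp)

lemma cmpP_eq [ci]: assumes "cmp n A" "cmp n B" shows "cmpP n (\<lambda>v. A v = B v)"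
proof -
  have "cmpP n (\<lambda>v. A v \<le> B v \<and> B v \<le> A v)" by (intro ci assms)
  then show ?thesis unfolding cmpP_def by (rule cmp_cong) auto
qed

lemma cmpP_const [ci]: "cmpP n (\<lambda>v. b)"
  unfolding cmpP_def by (cases b) (simp_all add: cmp_const)

lemma cmp_if [ci]: assumes "cmpP n P" "cmp n A" "cmp n B" shows "cmp n (\<lambda>v. if P v then A v else B v)"
  using assms unfolding cmpP_def
  by - (rule cmp_cong[where F="\<lambda>v. (if P v then 1 else 0) * A v + (1 - (if P v then 1 else 0)) * B v"], intro ci, assumption+, simp)

lemma rec_all: "rec_nat (Suc 0) (\<lambda>k r. r * (if P k then 1 else 0)) b = (if \<forall>j<b. P j then 1 else (0::nat))"
  by (induction b) (auto simp: less_Suc_eq)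

lemma cmpP_all [ci]:
  assumes "cmp n K" "cmpP (Suc n) (\<lambda>v. P (v 0) (\<lambda>i. v (Suc i)))"
  shows "cmpP n (\<lambda>v. \<forall>j<K v. P j v)"
proof -
  have h: "cmpP (Suc (Suc n)) (\<lambda>v. P (v 0) (\<lambda>i. v (Suc (Suc i))))"
    using cmp_weaken[of n "\<lambda>a w. if P a w then 1 else 0"] assms(2) unfolding cmpP_def by simp
  have "cmp n (\<lambda>v. rec_nat 1 (\<lambda>k r. r * (if P k v then 1 else 0)) (K v))"
    by (intro cmp_rec assms(1) cmp_mult cmp_var cmp_const h[unfolded cmpP_def]; simp)
  then show ?thesis unfolding cmpP_def by (rule cmp_cong) (simp add: rec_all)
qed

lemma cmpP_ex [ci]:
  assumes "cmp n K" "cmpP (Suc n) (\<lambda>v. P (v 0) (\<lambda>i. v (Suc i)))"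
  shows "cmpP n (\<lambda>v. \<exists>j<K v. P j v)"
proof -
  have h: "cmpP (Suc n) (\<lambda>v. \<not> P (v 0) (\<lambda>i. v (Suc i)))" using assms(2) by (rule cmpP_not)
  have "cmpP n (\<lambda>v. \<not> (\<forall>j<K v. \<not> P j v))" by (rule cmpP_not, rule cmpP_all[OF assms(1) h])
  then show ?thesis by simp
qed

lemma rec_sum: "rec_nat 0 (\<lambda>k r. r + F k) b = (\<Sum>j<b. F j)"
  by (induction b) auto

lemma cmp_sum [ci]:
  assumes "cmp n K" "cmp (Suc n) (\<lambda>v. F (v 0) (\<lambda>i. v (Suc i)))"
  shows "cmp n (\<lambda>v. \<Sum>j<K v. F j v)"
proof -
  have "cmp (Suc (Suc n)) (\<lambda>v. F (v 0) (\<lambda>i. v (Suc (Suc i))))"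
    using cmp_weaken[of n F] assms(2) by simp
  then have "cmp n (\<lambda>v. rec_nat 0 (\<lambda>k r. r + F k v) (K v))"
    by (intro cmp_rec assms(1) ci; assumption?; simp)
  then show ?thesis by (rule cmp_cong) (simp add: rec_sum)
qed

lemma cmp_least:
  assumes "cmpP (Suc n) (\<lambda>v. P (v 0) (\<lambda>i. v (Suc i)))" "\<And>v. \<exists>m. P m v"
  shows "cmp n (\<lambda>v. LEAST m. P m v)"
proof -
  have "cmp (Suc n) (\<lambda>v. 1 - (if P (v 0) (\<lambda>i. v (Suc i)) then 1 else 0))"
    using assms(1) unfolding cmpP_def by (intro cmp_diff cmp_const)
  then have "cmp n (\<lambda>v. LEAST m. 1 - (if P m v then 1 else 0) = (0::nat))"
    by (rule cmp_mn[where F="\<lambda>m v. 1 - (if P m v then 1 else 0)"]) (use assms(2) in auto)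
  then show ?thesis by (rule cmp_cong) simp
qed

lemma "cmpP 3 (\<lambda>v. \<forall>j<v 0. \<exists>k<v 1 + j. k * v 2 = j \<and> v 0 \<noteq> 5)"
  by (intro ci; simp)




definition pe :: "nat \<Rightarrow> nat \<Rightarrow> nat" where "pe a b = prod_encode (a, b)"
definition pfst :: "nat \<Rightarrow> nat" where "pfst n = fst (prod_decode n)"
definition psnd :: "nat \<Rightarrow> nat" where "psnd n = snd (prod_decode n)"

lemma pfst_pe [simp]: "pfst (pe a b) = a" by (simp add: pfst_def pe_def)
lemma psnd_pe [simp]: "psnd (pe a b) = b" by (simp add: psnd_def pe_def)
lemma pe_eq [simp]: "pe a b = pe c d \<longleftrightarrow> a = c \<and> b = d" by (simp add: pe_def)
lemma pe_pfst_psnd [simp]: "pe (pfst n) (psnd n) = n" by (simp add: pe_def pfst_def psnd_def)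
lemma pfst_le: "pfst n \<le> n" by (metis le_prod_encode_1 pe_def pe_pfst_psnd)
lemma psnd_le: "psnd n \<le> n" by (metis le_prod_encode_2 pe_def pe_pfst_psnd)

lemma rec_tri: "rec_nat 0 (\<lambda>k r. Suc (r + k)) n = triangle n" by (induction n) auto

lemma cmp_tri: "cmp n A \<Longrightarrow> cmp n (\<lambda>v. triangle (A v))"
proof -
  assume A: "cmp n A"
  have "cmp n (\<lambda>v. rec_nat 0 (\<lambda>k r. r + Suc k) (A v))"
    by (intro cmp_rec A ci; simp)
  then show ?thesis by (rule cmp_cong) (simp add: rec_tri)
qed

lemma cmp_pe [ci]: assumes "cmp n A" "cmp n B" shows "cmp n (\<lambda>v. pe (A v) (B v))"
proof -
  have "cmp n (\<lambda>v. triangle (A v + B v) + A v)" by (intro cmp_tri ci assms)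
  then show ?thesis by (rule cmp_cong) (simp add: pe_def prod_encode_def)
qed

lemma pfst_least: "pfst n = (LEAST a. \<exists>b<Suc n. pe a b = n)"
proof (rule sym, rule Least_equality)
  show "\<exists>b<Suc n. pe (pfst n) b = n" by (rule exI[of _ "psnd n"]) (simp add: le_imp_less_Suc psnd_le)
next
  fix a assume "\<exists>b<Suc n. pe a b = n"
  then obtain b where "pe a b = n" by auto
  then show "pfst n \<le> a" by auto
qed

lemma psnd_least: "psnd n = (LEAST b. \<exists>a<Suc n. pe a b = n)"
proof (rule sym, rule Least_equality)
  show "\<exists>a<Suc n. pe a (psnd n) = n" by (rule exI[of _ "pfst n"]) (simp add: le_imp_less_Suc pfst_le)
next
  fix b assume "\<exists>a<Suc n. pe a b = n"
  then obtain a where "pe a b = n" by auto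
  then show "psnd n \<le> b" by auto
qed

lemma cmp_pfst1: "cmp 1 (\<lambda>v. pfst (v 0))"
proof -
  have "cmp 1 (\<lambda>v. LEAST a. \<exists>b<Suc (v 0). pe a b = v 0)"
  proof (rule cmp_least)
    show "cmpP (Suc 1) (\<lambda>v. \<exists>b<Suc (v (Suc 0)). pe (v 0) b = v (Suc 0))" by (intro ci; simp)
    fix v :: "nat \<Rightarrow> nat" show "\<exists>a b. b < Suc (v 0) \<and> pe a b = v 0"
      by (rule exI[of _ "pfst (v 0)"], rule exI[of _ "psnd (v 0)"]) (simp add: le_imp_less_Suc psnd_le)
  qed
  then show ?thesis by (rule cmp_cong) (simp add: pfst_least)
qed

lemma cmp_psnd1: "cmp 1 (\<lambda>v. psnd (v 0))"
proof -
  have "cmp 1 (\<lambda>v. LEAST b. \<exists>a<Suc (v 0). pe a b = v 0)"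
  proof (rule cmp_least)
    show "cmpP (Suc 1) (\<lambda>v. \<exists>a<Suc (v (Suc 0)). pe a (v 0) = v (Suc 0))" by (intro ci; simp)
    fix v :: "nat \<Rightarrow> nat" show "\<exists>b a. a < Suc (v 0) \<and> pe a b = v 0"
      by (rule exI[of _ "psnd (v 0)"], rule exI[of _ "pfst (v 0)"]) (simp add: le_imp_less_Suc pfst_le)
  qed
  then show ?thesis by (rule cmp_cong) (simp add: psnd_least)
qed

lemma cmp_pfst [ci]: "cmp n A \<Longrightarrow> cmp n (\<lambda>v. pfst (A v))"
  by (rule cmp_compose1[OF cmp_pfst1])
lemma cmp_psnd [ci]: "cmp n A \<Longrightarrow> cmp n (\<lambda>v. psnd (A v))"
  by (rule cmp_compose1[OF cmp_psnd1])

section \<open>Lists\<close>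

definition lhd :: "nat \<Rightarrow> nat" where "lhd c = pfst (c - 1)"
definition ltl :: "nat \<Rightarrow> nat" where "ltl c = psnd (c - 1)"
definition lcons :: "nat \<Rightarrow> nat \<Rightarrow> nat" where "lcons x c = Suc (pe x c)"
definition lnth :: "nat \<Rightarrow> nat \<Rightarrow> nat" where "lnth c k = lhd ((ltl ^^ k) c)"
definition llen :: "nat \<Rightarrow> nat" where "llen c = (LEAST k. (ltl ^^ k) c = 0)"

lemma list_encode_Cons: "list_encode (x # xs) = lcons x (list_encode xs)"
  by (simp add: lcons_def pe_def)

lemma pe00: "pe 0 0 = 0" by (simp add: pe_def prod_encode_def)
lemma psnd0: "psnd 0 = 0" by (metis pe00 psnd_pe)
lemma pfst0: "pfst 0 = 0" by (metis pe00 pfst_pe)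

lemma ltl_enc: "ltl (list_encode xs) = list_encode (tl xs)"
  by (cases xs) (auto simp: ltl_def psnd0, simp add: psnd_def)

lemma lhd_enc: "xs \<noteq> [] \<Longrightarrow> lhd (list_encode xs) = hd xs"
  by (cases xs) (auto simp: lhd_def pfst_def)

lemma ltl_pow_enc: "(ltl ^^ k) (list_encode xs) = list_encode (drop k xs)"
  by (induction k arbitrary: xs) (auto simp: ltl_enc drop_Suc funpow_swap1 tl_drop)

lemma lnth_enc: "k < length xs \<Longrightarrow> lnth (list_encode xs) k = xs ! k"
  by (simp add: lnth_def ltl_pow_enc lhd_enc hd_drop_conv_nth)

lemma llen_enc: "llen (list_encode xs) = length xs"
  unfolding llen_def ltl_pow_enc
proof (rule Least_equality)
  show "list_encode (drop (length xs) xs) = 0" by simp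
next
  fix k assume "list_encode (drop k xs) = 0"
  then have "drop k xs = []" by (metis list_encode.simps(1) list_encode_eq)
  then show "length xs \<le> k" by simp
qed

lemma lcons_enc: "lcons x (list_encode xs) = list_encode (x # xs)"
  by (simp add: lcons_def pe_def)

lemma cmp_ltl [ci]: "cmp n A \<Longrightarrow> cmp n (\<lambda>v. ltl (A v))"
  unfolding ltl_def by (intro ci; simp)
lemma cmp_lhd [ci]: "cmp n A \<Longrightarrow> cmp n (\<lambda>v. lhd (A v))"
  unfolding lhd_def by (intro ci; simp)
lemma cmp_lcons [ci]: "cmp n A \<Longrightarrow> cmp n B \<Longrightarrow> cmp n (\<lambda>v. lcons (A v) (B v))"
  unfolding lcons_def by (intro ci; simp)

lemma rec_ltl: "rec_nat c (\<lambda>k r. ltl r) k = (ltl ^^ k) c" by (induction k) auto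

lemma cmp_ltlpow: assumes "cmp n K" "cmp n C" shows "cmp n (\<lambda>v. (ltl ^^ K v) (C v))"
proof -
  have "cmp n (\<lambda>v. rec_nat (C v) (\<lambda>k r. ltl r) (K v))" by (intro cmp_rec assms ci; simp)
  then show ?thesis by (rule cmp_cong) (simp add: rec_ltl)
qed

lemma cmp_lnth [ci]: "cmp n C \<Longrightarrow> cmp n K \<Longrightarrow> cmp n (\<lambda>v. lnth (C v) (K v))"
  unfolding lnth_def by (intro cmp_lhd cmp_ltlpow)

lemma cmp_llen1: "cmp 1 (\<lambda>v. llen (v 0))"
  unfolding llen_def
proof (rule cmp_least)
  show "cmpP (Suc 1) (\<lambda>v. (ltl ^^ v 0) (v (Suc 0)) = 0)" by (intro cmpP_eq cmp_ltlpow ci; simp)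
  fix v :: "nat \<Rightarrow> nat"
  show "\<exists>m. (ltl ^^ m) (v 0) = 0"
    using ltl_pow_enc[of "length (list_decode (v 0))" "list_decode (v 0)"] by auto
qed

lemma cmp_llen [ci]: "cmp n A \<Longrightarrow> cmp n (\<lambda>v. llen (A v))"
  by (rule cmp_compose1[OF cmp_llen1])




primrec enc :: "recf \<Rightarrow> nat" where
  "enc Zf = pe 0 0"
| "enc Sf = pe 1 0"
| "enc (Idf i) = pe 2 i"
| "enc (Cnf f gs) = pe 3 (pe (enc f) (list_encode (map enc gs)))"
| "enc (Prf f g) = pe 4 (pe (enc f) (enc g))"
| "enc (Mnf f) = pe 5 (enc f)"

type_synonym line = "nat \<times> nat list \<times> nat \<times> nat"

definition has :: "line list \<Rightarrow> nat \<times> nat list \<times> nat \<Rightarrow> bool" where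
  "has P J \<longleftrightarrow> (\<exists>h. (fst J, fst (snd J), snd (snd J), h) \<in> set P)"

definition vl :: "(nat \<times> nat list \<times> nat \<Rightarrow> bool) \<Rightarrow> line \<Rightarrow> bool" where
"vl H l = (case l of (c, xs, y, h) \<Rightarrow>
  (if pfst c = 0 then y = 0
   else if pfst c = 1 then xs \<noteq> [] \<and> y = Suc (hd xs)
   else if pfst c = 2 then psnd c < length xs \<and> y = xs ! psnd c
   else if pfst c = 3 then length (list_decode h) = length (list_decode (psnd (psnd c))) \<and>
        (\<forall>k<length (list_decode (psnd (psnd c))). H (list_decode (psnd (psnd c)) ! k, xs, list_decode h ! k))
        \<and> H (pfst (psnd c), list_decode h, y)
   else if pfst c = 4 then xs \<noteq> [] \<and> (if hd xs = 0 then H (pfst (psnd c), tl xs, y)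
        else H (c, (hd xs - 1) # tl xs, h) \<and> H (psnd (psnd c), (hd xs - 1) # h # tl xs, y))
   else if pfst c = 5 then H (psnd c, y # xs, 0) \<and> (\<forall>m<y. \<exists>k. H (psnd c, m # xs, Suc k))
   else False))"

definition valid_line :: "line list \<Rightarrow> line \<Rightarrow> bool" where
  "valid_line P l = vl (has P) l"

lemma vl_mono: "(\<And>J. H J \<Longrightarrow> H' J) \<Longrightarrow> vl H l \<Longrightarrow> vl H' l"
  by (cases l) (simp add: vl_def split: if_splits; blast)

definition valid :: "line list \<Rightarrow> bool" where
  "valid T \<longleftrightarrow> (\<forall>i<length T. valid_line (take i T) (T ! i))"

lemma has_take:
  assumes "has (take i T) (c, xs, y)"
  obtains j h where "j < i" "j < length T" "T ! j = (c, xs, y, h)"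
  using assms unfolding has_def by (auto simp: in_set_conv_nth)

lemma soundness:
  assumes V: "valid T"
  shows "i < length T \<Longrightarrow> T ! i = (c, xs, y, h) \<Longrightarrow> enc f = c \<Longrightarrow> eval_recf f xs y"
proof (induction i arbitrary: c xs y h f rule: less_induct)
  case (less i)
  have IH: "eval_recf f' xs' y'" if HH: "has (take i T) (c', xs', y')" "enc f' = c'" for f' c' xs' y'
  proof -
    obtain j h' where "j < i" "j < length T" "T ! j = (c', xs', y', h')" by (rule has_take[OF HH(1)])
    then show ?thesis using less.IH HH(2) by blast
  qed
  have vl: "valid_line (take i T) (c, xs, y, h)" using V less.prems unfolding valid_def by metis
  show ?case
  proof (cases f)
    case Zf then show ?thesis using vl less.prems by (auto simp: valid_line_def vl_def intro: eval_recf.zero)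
  next
    case Sf then show ?thesis using vl less.prems
      by (cases xs) (auto simp: valid_line_def vl_def intro: eval_recf.succ)
  next
    case (Idf k) then show ?thesis using vl less.prems by (auto simp: valid_line_def vl_def intro: eval_recf.proj)
  next
    case (Cnf g gs)
    let ?ys = "list_decode h"
    have c: "pfst c = 3" "pfst (psnd c) = enc g" "list_decode (psnd (psnd c)) = map enc gs"
      using Cnf less.prems by auto
    then have v: "length ?ys = length gs" "\<forall>k<length gs. has (take i T) (enc (gs ! k), xs, ?ys ! k)"
      "has (take i T) (enc g, ?ys, y)"
      using vl by (auto simp: valid_line_def vl_def)
    have "list_all2 (\<lambda>g y. eval_recf g xs y) gs ?ys"
      using v(1,2) IH by (auto simp: list_all2_conv_all_nth)
    moreover have "eval_recf g ?ys y" using v(3) IH by blast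
    ultimately show ?thesis using Cnf by (auto intro: eval_recf.comp)
  next
    case (Prf g1 g2)
    have c: "pfst c = 4" "pfst (psnd c) = enc g1" "psnd (psnd c) = enc g2"
      using Prf less.prems by auto
    then have ne: "xs \<noteq> []" using vl by (auto simp: valid_line_def vl_def)
    then obtain n rest where xs: "xs = n # rest" by (cases xs) auto
    show ?thesis
    proof (cases n)
      case 0
      then have "has (take i T) (enc g1, rest, y)" using vl c xs by (auto simp: valid_line_def vl_def)
      then show ?thesis using IH xs 0 Prf by (auto intro: eval_recf.pr0)
    next
      case (Suc m)
      then have "has (take i T) (c, m # rest, h)" "has (take i T) (enc g2, m # h # rest, y)"
        using vl c xs by (auto simp: valid_line_def vl_def)
      then have "eval_recf (Prf g1 g2) (m # rest) h" "eval_recf g2 (m # h # rest) y"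
        using IH Prf less.prems by auto
      then show ?thesis using xs Suc Prf by (auto intro: eval_recf.prS)
    qed
  next
    case (Mnf g)
    have c: "pfst c = 5" "psnd c = enc g" using Mnf less.prems by auto
    then have "has (take i T) (enc g, y # xs, 0)" "\<forall>m<y. \<exists>k. has (take i T) (enc g, m # xs, Suc k)"
      using vl by (auto simp: valid_line_def vl_def)
    then have "eval_recf g (y # xs) 0" "\<forall>m<y. \<exists>k. eval_recf g (m # xs) (Suc k)"
      using IH by blast+
    then show ?thesis using Mnf by (auto intro: eval_recf.mn)
  qed
qed




lemma has_mono: "set P \<subseteq> set Q \<Longrightarrow> has P J \<Longrightarrow> has Q J"
  unfolding has_def by auto

lemma has_app1: "has T J \<Longrightarrow> has (T @ T') J" unfolding has_def by auto
lemma has_app2: "has T' J \<Longrightarrow> has (T @ T') J" unfolding has_def by auto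

lemma valid_line_mono: assumes "set P \<subseteq> set Q" "valid_line P l" shows "valid_line Q l"
  using has_mono[OF assms(1)] assms(2) unfolding valid_line_def by (rule vl_mono)

lemma valid_append: assumes "valid T1" "valid T2" shows "valid (T1 @ T2)"
  unfolding valid_def
proof (intro allI impI)
  fix i assume i: "i < length (T1 @ T2)"
  show "valid_line (take i (T1 @ T2)) ((T1 @ T2) ! i)"
  proof (cases "i < length T1")
    case True then show ?thesis using assms(1) by (simp add: valid_def nth_append)
  next
    case False
    then have "valid_line (take (i - length T1) T2) (T2 ! (i - length T1))"
      using assms(2) i unfolding valid_def by auto
    then show ?thesis using False by (auto simp: nth_append intro: valid_line_mono)
  qed
qed

lemma valid_snoc: "valid T \<Longrightarrow> valid_line T l \<Longrightarrow> valid (T @ [l])"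
  unfolding valid_def by (auto simp: nth_append less_Suc_eq)

lemma valid_Nil: "valid []" by (simp add: valid_def)

lemma family:
  assumes "\<forall>x\<in>set L. \<exists>T. valid T \<and> (\<exists>J. R x J \<and> has T J)"
  shows "\<exists>T. valid T \<and> (\<forall>x\<in>set L. \<exists>J. R x J \<and> has T J)"
  using assms
proof (induction L)
  case Nil then show ?case using valid_Nil by auto
next
  case (Cons a L)
  then obtain T where T: "valid T" "\<forall>x\<in>set L. \<exists>J. R x J \<and> has T J" by auto
  obtain T' J where T': "valid T'" "R a J" "has T' J" using Cons.prems by auto
  have "\<forall>x\<in>set (a # L). \<exists>J. R x J \<and> has (T @ T') J"
    using T(2) T'(2,3) has_app1[of T _ T'] has_app2[of T' _ T] by (metis set_ConsD)
  then show ?case using valid_append[OF T(1) T'(1)] by blast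
qed

lemma has_snoc: "has (T @ [(c, xs, y, h)]) (c, xs, y)"
  unfolding has_def by auto

lemma completeness:
  "eval_recf f xs y \<Longrightarrow> \<exists>T. valid T \<and> has T (enc f, xs, y)"
proof (induction rule: eval_recf.induct)
  case (zero xs)
  have "valid ([] @ [(enc Zf, xs, 0, 0)])" by (rule valid_snoc[OF valid_Nil]) (simp add: valid_line_def vl_def)
  then show ?case using has_snoc[of "[]"] by fastforce
next
  case (succ x xs)
  have "valid ([] @ [(enc Sf, x # xs, Suc x, 0)])" by (rule valid_snoc[OF valid_Nil]) (simp add: valid_line_def vl_def)
  then show ?case using has_snoc[of "[]"] by fastforce
next
  case (proj i xs)
  have "valid ([] @ [(enc (Idf i), xs, xs ! i, 0)])" by (rule valid_snoc[OF valid_Nil]) (simp add: valid_line_def vl_def proj)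
  then show ?case using has_snoc[of "[]"] by fastforce
next
  case (comp xs gs ys f y)
  have len: "length gs = length ys" using comp(1) by (rule list_all2_lengthD)
  have "\<forall>x\<in>set (zip gs ys). \<exists>T. valid T \<and> (\<exists>J. J = (enc (fst x), xs, snd x) \<and> has T J)"
    using comp(1) by (auto simp: list_all2_iff)
  from family[OF this] obtain T0 where T0: "valid T0"
    "\<forall>x\<in>set (zip gs ys). has T0 (enc (fst x), xs, snd x)" by auto
  obtain Tf where Tf: "valid Tf" "has Tf (enc f, ys, y)" using comp by blast
  let ?T = "T0 @ Tf"
  have vT: "valid ?T" using T0 Tf valid_append by auto
  have "valid_line ?T (enc (Cnf f gs), xs, y, list_encode ys)"
  proof -
    have "\<forall>k<length gs. has ?T (enc (gs ! k), xs, ys ! k)"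
    proof (intro allI impI)
      fix k assume k: "k < length gs"
      then have "(gs ! k, ys ! k) \<in> set (zip gs ys)" using len by (metis in_set_zip fst_conv snd_conv)
      then show "has ?T (enc (gs ! k), xs, ys ! k)" using T0(2) has_mono[of T0 ?T] by fastforce
    qed
    moreover have "has ?T (enc f, ys, y)" using Tf has_mono[of Tf ?T] by auto
    ultimately show ?thesis using len by (simp add: valid_line_def vl_def)
  qed
  then have "valid (?T @ [(enc (Cnf f gs), xs, y, list_encode ys)])" using vT valid_snoc by blast
  then show ?case using has_snoc by blast
next
  case (pr0 f xs y g)
  obtain T where T: "valid T" "has T (enc f, xs, y)" using pr0 by auto
  have "valid_line T (enc (Prf f g), 0 # xs, y, 0)" using T by (simp add: valid_line_def vl_def)
  then have "valid (T @ [(enc (Prf f g), 0 # xs, y, 0)])" using T valid_snoc by blast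
  then show ?case using has_snoc by blast
next
  case (prS f g n xs r y)
  obtain T1 where T1: "valid T1" "has T1 (enc (Prf f g), n # xs, r)" using prS by auto
  obtain T2 where T2: "valid T2" "has T2 (enc g, n # r # xs, y)" using prS by auto
  let ?T = "T1 @ T2"
  have "valid ?T" using T1 T2 valid_append by auto
  moreover have "valid_line ?T (enc (Prf f g), Suc n # xs, y, r)"
    using T1(2) T2(2) has_mono[of T1 ?T] has_mono[of T2 ?T] by (simp add: valid_line_def vl_def)
  ultimately have "valid (?T @ [(enc (Prf f g), Suc n # xs, y, r)])" using valid_snoc by blast
  then show ?case using has_snoc by blast
next
  case (mn f n xs)
  obtain T0 where T0: "valid T0" "has T0 (enc f, n # xs, 0)" using mn by blast
  have fam: "\<forall>m\<in>set [0..<n]. \<exists>T. valid T \<and> (\<exists>J. (\<exists>k. J = (enc f, m # xs, Suc k)) \<and> has T J)"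
  proof
    fix m assume "m \<in> set [0..<n]"
    then have "m < n" by simp
    then obtain k T where "valid T" "has T (enc f, m # xs, Suc k)" using mn(3) by blast
    then show "\<exists>T. valid T \<and> (\<exists>J. (\<exists>k. J = (enc f, m # xs, Suc k)) \<and> has T J)" by blast
  qed
  obtain T1 where T1: "valid T1" "\<forall>m\<in>set [0..<n]. \<exists>J. (\<exists>k. J = (enc f, m # xs, Suc k)) \<and> has T1 J"
    using family[OF fam] by blast
  let ?T = "T0 @ T1"
  have h1: "has ?T (enc f, n # xs, 0)" using T0(2) by (rule has_app1)
  have h2: "\<forall>m<n. \<exists>k. has ?T (enc f, m # xs, Suc k)"
  proof (intro allI impI)
    fix m assume "m < n"
    then have "m \<in> set [0..<n]" by simp
    then obtain J where "\<exists>k. J = (enc f, m # xs, Suc k)" "has T1 J" using T1(2) by blast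
    then obtain k where "has T1 (enc f, m # xs, Suc k)" by blast
    then show "\<exists>k. has ?T (enc f, m # xs, Suc k)" using has_app2 by blast
  qed
  have "valid ?T" using T0 T1 valid_append by auto
  moreover have "valid_line ?T (enc (Mnf f), xs, n, 0)"
    using h1 h2 by (simp add: valid_line_def vl_def)
  ultimately have "valid (?T @ [(enc (Mnf f), xs, n, 0)])" using valid_snoc by blast
  then show ?case using has_snoc by blast
qed




inductive_cases ZfE: "eval_recf Zf xs y"
inductive_cases SfE: "eval_recf Sf xs y"
inductive_cases IdfE: "eval_recf (Idf i) xs y"
inductive_cases CnfE: "eval_recf (Cnf f gs) xs y"
inductive_cases PrfE: "eval_recf (Prf f g) xs y"
inductive_cases MnfE: "eval_recf (Mnf f) xs y"

lemma eval_det: "eval_recf f xs y \<Longrightarrow> eval_recf f xs y' \<Longrightarrow> y = y'"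
proof (induction arbitrary: y' rule: eval_recf.induct)
  case (zero xs) then show ?case by (blast elim: ZfE)
next
  case (succ x xs) then show ?case by (blast elim: SfE)
next
  case (proj i xs) then show ?case by (blast elim: IdfE)
next
  case (comp xs gs ys f y)
  from comp.prems obtain ys' where ys': "list_all2 (\<lambda>g y. eval_recf g xs y) gs ys'" "eval_recf f ys' y'"
    by (blast elim: CnfE)
  have "ys = ys'" using comp.IH(1) ys'(1)
  proof (induction gs arbitrary: ys ys')
    case Nil then show ?case by auto
  next
    case (Cons a gs)
    then show ?case by (auto simp: list_all2_Cons1)
  qed
  then show ?case using comp.IH(2) ys'(2) by auto
next
  case (pr0 f xs y g) from pr0.prems show ?case by (rule PrfE) (use pr0.IH in auto)
next
  case (prS f g n xs r y)
  from prS.prems obtain r' where "eval_recf (Prf f g) (n # xs) r'" "eval_recf g (n # r' # xs) y'"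
    by (rule PrfE) auto
  then show ?case using prS.IH by auto
next
  case (mn f n xs)
  from mn.prems have b: "eval_recf f (y' # xs) 0" "\<forall>m<y'. \<exists>k. eval_recf f (m # xs) (Suc k)"
    by (blast elim: MnfE)+
  show ?case
  proof (rule linorder_cases[of n y'])
    assume "n < y'" then show ?thesis using b(2) mn.IH(1) by fastforce
  next
    assume "y' < n" then show ?thesis using b(1) mn.IH(2) by fastforce
  qed simp
qed




definition line_dec :: "nat \<Rightarrow> line" where
  "line_dec L = (pfst (pfst L), list_decode (pfst (psnd (pfst L))), psnd (psnd (pfst L)), psnd L)"

definition decT :: "nat \<Rightarrow> line list" where
  "decT t = map line_dec (list_decode t)"

definition Check :: "nat \<Rightarrow> nat \<Rightarrow> bool" where
  "Check e t \<longleftrightarrow> valid (decT t) \<and> has (decT t) (e, [e], 0)"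

definition hasc :: "nat \<Rightarrow> nat \<Rightarrow> nat \<Rightarrow> bool" where
  "hasc t i J \<longleftrightarrow> (\<exists>j<i. pfst (lnth t j) = J)"

definition has5 :: "nat \<Rightarrow> nat \<Rightarrow> nat \<Rightarrow> nat \<Rightarrow> bool" where
  "has5 t i c x \<longleftrightarrow> (\<exists>j<i. pfst (pfst (lnth t j)) = c \<and> pfst (psnd (pfst (lnth t j))) = x
      \<and> psnd (psnd (pfst (lnth t j))) \<noteq> 0)"

definition vlc :: "nat \<Rightarrow> nat \<Rightarrow> nat \<Rightarrow> bool" where
"vlc t i L = (
  if pfst (pfst (pfst L)) = 0 then psnd (psnd (pfst L)) = 0
  else if pfst (pfst (pfst L)) = 1 then pfst (psnd (pfst L)) \<noteq> 0 \<and> psnd (psnd (pfst L)) = Suc (lhd (pfst (psnd (pfst L))))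
  else if pfst (pfst (pfst L)) = 2 then psnd (pfst (pfst L)) < llen (pfst (psnd (pfst L)))
      \<and> psnd (psnd (pfst L)) = lnth (pfst (psnd (pfst L))) (psnd (pfst (pfst L)))
  else if pfst (pfst (pfst L)) = 3 then llen (psnd L) = llen (psnd (psnd (pfst (pfst L)))) \<and>
     (\<forall>k<llen (psnd (psnd (pfst (pfst L)))). hasc t i (pe (lnth (psnd (psnd (pfst (pfst L)))) k) (pe (pfst (psnd (pfst L))) (lnth (psnd L) k))))
     \<and> hasc t i (pe (pfst (psnd (pfst (pfst L)))) (pe (psnd L) (psnd (psnd (pfst L)))))
  else if pfst (pfst (pfst L)) = 4 then pfst (psnd (pfst L)) \<noteq> 0 \<and>
     (if lhd (pfst (psnd (pfst L))) = 0 then hasc t i (pe (pfst (psnd (pfst (pfst L)))) (pe (ltl (pfst (psnd (pfst L)))) (psnd (psnd (pfst L)))))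
      else hasc t i (pe (pfst (pfst L)) (pe (lcons (lhd (pfst (psnd (pfst L))) - 1) (ltl (pfst (psnd (pfst L))))) (psnd L)))
        \<and> hasc t i (pe (psnd (psnd (pfst (pfst L)))) (pe (lcons (lhd (pfst (psnd (pfst L))) - 1) (lcons (psnd L) (ltl (pfst (psnd (pfst L)))))) (psnd (psnd (pfst L))))))
  else if pfst (pfst (pfst L)) = 5 then hasc t i (pe (psnd (pfst (pfst L))) (pe (lcons (psnd (psnd (pfst L))) (pfst (psnd (pfst L)))) 0))
     \<and> (\<forall>m<psnd (psnd (pfst L)). has5 t i (psnd (pfst (pfst L))) (lcons m (pfst (psnd (pfst L)))))
  else False)"

definition Check_code :: "nat \<Rightarrow> nat \<Rightarrow> bool" where
  "Check_code e t \<longleftrightarrow> (\<forall>i<llen t. vlc t i (lnth t i)) \<and> hasc t (llen t) (pe e (pe (lcons e 0) 0))"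

lemma cmpP_if [ci]: assumes "cmpP n P" "cmpP n A" "cmpP n B"
  shows "cmpP n (\<lambda>v. if P v then A v else B v)"
proof -
  have "cmpP n (\<lambda>v. (P v \<longrightarrow> A v) \<and> (\<not> P v \<longrightarrow> B v))" by (intro ci assms)
  then show ?thesis unfolding cmpP_def by (rule cmp_cong) auto
qed

lemma cmpP_Check: assumes E: "cmp n E" and T: "cmp n TT" shows "cmpP n (\<lambda>v. Check_code (E v) (TT v))"
proof -
  note E1 = cmp_shift[OF E] note E2 = cmp_shift[OF E1] note E3 = cmp_shift[OF E2]
  note T1 = cmp_shift[OF T] note T2 = cmp_shift[OF T1] note T3 = cmp_shift[OF T2]
  show ?thesis
  unfolding Check_code_def vlc_def hasc_def has5_def
  apply (intro ci E E1 E2 E3 T T1 T2 T3) apply simp_all done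
qed

lemma ld_nil: "list_decode x = [] \<longleftrightarrow> x = 0"
  by (cases x) (auto split: prod.splits)
lemma ld_hd: "x \<noteq> 0 \<Longrightarrow> hd (list_decode x) = lhd x"
  by (metis ld_nil lhd_enc list_decode_inverse)
lemma ld_tl: "tl (list_decode x) = list_decode (ltl x)"
  by (metis list_decode_inverse list_encode_inverse ltl_enc)
lemma ld_len: "length (list_decode x) = llen x"
  by (metis list_decode_inverse llen_enc)
lemma ld_nth: "k < llen x \<Longrightarrow> list_decode x ! k = lnth x k"
  by (metis ld_len list_decode_inverse lnth_enc)
lemma le_cons: "list_encode (a # xs) = lcons a (list_encode xs)"
  by (simp add: lcons_def pe_def)

lemma decT_len: "length (decT t) = llen t" by (simp add: decT_def ld_len)
lemma decT_nth: "i < llen t \<Longrightarrow> decT t ! i = line_dec (lnth t i)"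
  by (simp add: decT_def ld_len ld_nth)

lemma line_dec_eq: "line_dec L = (c, xs, y, h) \<longleftrightarrow> pfst L = pe c (pe (list_encode xs) y) \<and> psnd L = h"
proof
  assume "line_dec L = (c, xs, y, h)"
  then have h: "pfst (pfst L) = c" "list_decode (pfst (psnd (pfst L))) = xs" "psnd (psnd (pfst L)) = y" "psnd L = h"
    by (auto simp: line_dec_def)
  have "list_encode xs = pfst (psnd (pfst L))" using h(2) by auto
  moreover have "pfst L = pe (pfst (pfst L)) (pe (pfst (psnd (pfst L))) (psnd (psnd (pfst L))))" by simp
  ultimately show "pfst L = pe c (pe (list_encode xs) y) \<and> psnd L = h" using h by simp
next
  assume "pfst L = pe c (pe (list_encode xs) y) \<and> psnd L = h"
  then show "line_dec L = (c, xs, y, h)" by (simp add: line_dec_def)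
qed

lemma has_code: assumes "i \<le> llen t"
  shows "has (take i (decT t)) (c, xs, y) \<longleftrightarrow> hasc t i (pe c (pe (list_encode xs) y))"
proof -
  have "has (take i (decT t)) (c, xs, y) \<longleftrightarrow> (\<exists>h. \<exists>j<i. decT t ! j = (c, xs, y, h))"
    using assms by (simp add: has_def in_set_conv_nth decT_len min_def cong: conj_cong)
  also have "\<dots> \<longleftrightarrow> (\<exists>j<i. \<exists>h. line_dec (lnth t j) = (c, xs, y, h))"
  proof -
    have eq: "\<forall>j<i. decT t ! j = line_dec (lnth t j)" using assms decT_nth by auto
    show ?thesis using eq by (auto simp del: line_dec_eq) (metis)
  qed
  also have "\<dots> \<longleftrightarrow> hasc t i (pe c (pe (list_encode xs) y))"
    by (auto simp: line_dec_eq hasc_def)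
  finally show ?thesis .
qed

lemma has5_code: "(\<exists>k. hasc t i (pe c (pe x (Suc k)))) \<longleftrightarrow> has5 t i c x"
  unfolding hasc_def has5_def
proof
  assume "\<exists>k j. j < i \<and> pfst (lnth t j) = pe c (pe x (Suc k))"
  then show "\<exists>j<i. pfst (pfst (lnth t j)) = c \<and> pfst (psnd (pfst (lnth t j))) = x \<and> psnd (psnd (pfst (lnth t j))) \<noteq> 0"
    by auto
next
  assume "\<exists>j<i. pfst (pfst (lnth t j)) = c \<and> pfst (psnd (pfst (lnth t j))) = x \<and> psnd (psnd (pfst (lnth t j))) \<noteq> 0"
  then obtain j where j: "j < i" "pfst (pfst (lnth t j)) = c" "pfst (psnd (pfst (lnth t j))) = x" "psnd (psnd (pfst (lnth t j))) \<noteq> 0"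
    by auto
  then obtain k where "psnd (psnd (pfst (lnth t j))) = Suc k" using not0_implies_Suc by blast
  then have "pfst (lnth t j) = pe c (pe x (Suc k))" using j by (metis pe_pfst_psnd)
  then show "\<exists>k j. j < i \<and> pfst (lnth t j) = pe c (pe x (Suc k))" using j(1) by blast
qed

lemma vl_code: assumes i: "i < llen t"
  shows "valid_line (take i (decT t)) (decT t ! i) \<longleftrightarrow> vlc t i (lnth t i)"
proof -
  have i': "i \<le> llen t" using i by simp
  have K: "pfst (pfst (pfst (lnth t i))) = 0 \<or> pfst (pfst (pfst (lnth t i))) = 1 \<or>
    pfst (pfst (pfst (lnth t i))) = 2 \<or> pfst (pfst (pfst (lnth t i))) = 3 \<or>
    pfst (pfst (pfst (lnth t i))) = 4 \<or> pfst (pfst (pfst (lnth t i))) = 5 \<or>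
    pfst (pfst (pfst (lnth t i))) > 5" by arith
  show ?thesis
    unfolding decT_nth[OF i] valid_line_def vl_def line_dec_def vlc_def
    using K
    by (elim disjE) (simp_all add: has_code[OF i'] has5_code ld_nil ld_hd ld_tl ld_len ld_nth le_cons
        del: list_encode.simps(2) cong: conj_cong)
qed

lemma Check_code_eq: "Check e t \<longleftrightarrow> Check_code e t"
proof -
  have "valid (decT t) \<longleftrightarrow> (\<forall>i<llen t. vlc t i (lnth t i))"
    unfolding valid_def decT_len using vl_code by auto
  moreover have "has (decT t) (e, [e], 0) \<longleftrightarrow> hasc t (llen t) (pe e (pe (lcons e 0) 0))"
    using has_code[of "llen t" t e "[e]" 0] by (simp add: decT_len le_cons del: list_encode.simps(2))
  ultimately show ?thesis unfolding Check_def Check_code_def by simp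
qed

lemma diag: "(\<exists>t. Check (enc f) t) \<longleftrightarrow> eval_recf f [enc f] 0"
proof
  assume "\<exists>t. Check (enc f) t"
  then obtain t where "valid (decT t)" "has (decT t) (enc f, [enc f], 0)" unfolding Check_def by auto
  then obtain h where "(enc f, [enc f], 0, h) \<in> set (decT t)" unfolding has_def by auto
  then obtain i where "i < length (decT t)" "decT t ! i = (enc f, [enc f], 0, h)" by (auto simp: in_set_conv_nth)
  then show "eval_recf f [enc f] 0" using soundness[OF \<open>valid (decT t)\<close>] by blast
next
  assume "eval_recf f [enc f] 0"
  then obtain T where T: "valid T" "has T (enc f, [enc f], 0)" using completeness by blast
  let ?t = "list_encode (map (\<lambda>(c, xs, y, h). pe (pe c (pe (list_encode xs) y)) h) T)"
  have "decT ?t = T"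
    unfolding decT_def by (induction T) (auto simp: line_dec_def)
  then show "\<exists>t. Check (enc f) t" using T unfolding Check_def by metis
qed




lemma div2_least: "(x::nat) div 2 = (LEAST q. x < 2 * q + 2)"
  by (rule sym, rule Least_equality) auto

lemma cmp_div2_1: "cmp 1 (\<lambda>v. v 0 div 2)"
proof -
  have "cmp 1 (\<lambda>v. LEAST q. v 0 < 2 * q + 2)"
  proof (rule cmp_least)
    show "cmpP (Suc 1) (\<lambda>v. v (Suc 0) < 2 * v 0 + 2)" by (intro ci; simp)
    fix v :: "nat \<Rightarrow> nat" show "\<exists>q. v 0 < 2 * q + 2" by (rule exI[of _ "v 0"]) simp
  qed
  then show ?thesis by (rule cmp_cong) (simp add: div2_least)
qed

lemma cmp_div2 [ci]: "cmp n A \<Longrightarrow> cmp n (\<lambda>v. A v div 2)"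
  by (rule cmp_compose1[OF cmp_div2_1])

lemma cmpP_even [ci]: assumes "cmp n A" shows "cmpP n (\<lambda>v. even (A v))"
proof -
  have h: "cmpP n (\<lambda>v. A v = 2 * (A v div 2))" by (intro ci assms)
  have E: "\<And>x::nat. (x = 2 * (x div 2)) = even x" by presburger
  show ?thesis using h unfolding cmpP_def by (rule cmp_cong) (simp only: E)
qed

definition Ppos :: "nat \<Rightarrow> nat \<Rightarrow> nat" where
  "Ppos n k = (\<Sum>j<llen n. if pfst (lnth n j) = 2 * k \<and> even (psnd (lnth n j)) then psnd (lnth n j) div 2 else 0)"
definition Pneg :: "nat \<Rightarrow> nat \<Rightarrow> nat" where
  "Pneg n k = (\<Sum>j<llen n. if pfst (lnth n j) = 2 * k \<and> odd (psnd (lnth n j)) then Suc (psnd (lnth n j) div 2) else 0)"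

lemma cmp_Ppos [ci]: assumes A: "cmp n A" and K: "cmp n K" shows "cmp n (\<lambda>v. Ppos (A v) (K v))"
proof -
  note A1 = cmp_shift[OF A] note K1 = cmp_shift[OF K]
  show ?thesis unfolding Ppos_def by (intro ci A K A1 K1; simp)
qed

lemma cmp_Pneg [ci]: assumes A: "cmp n A" and K: "cmp n K" shows "cmp n (\<lambda>v. Pneg (A v) (K v))"
proof -
  note A1 = cmp_shift[OF A] note K1 = cmp_shift[OF K]
  show ?thesis unfolding Pneg_def by (intro ci A K A1 K1; simp)
qed

lemma sum_list_code0: "sum_list (map (F :: nat \<Rightarrow> nat) xs) = (\<Sum>j<length xs. F (xs ! j))"
  by (induction xs) (simp_all add: sum.lessThan_Suc_shift del: sum.lessThan_Suc)

lemma sum_list_code: "sum_list (map (F :: nat \<Rightarrow> nat) (list_decode n)) = (\<Sum>j<llen n. F (lnth n j))"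
  by (simp add: sum_list_code0 ld_len ld_nth)

lemma int_decode_alt: "int_decode m = (if even m then int (m div 2) else - int (m div 2) - 1)"
  by (simp add: int_decode_def sum_decode_def)

lemma int_decode_eq_int: "int_decode m = int k \<longleftrightarrow> m = 2 * k"
proof -
  have "int_encode (int k) = 2 * k" by (simp add: int_encode_def sum_encode_def)
  then show ?thesis by (metis int_decode_inverse int_encode_inverse)
qed

lemma lookup_sum_list: "Poly_Mapping.lookup (sum_list (xs :: ('a \<Rightarrow>\<^sub>0 'b::comm_monoid_add) list)) x = sum_list (map (\<lambda>p. Poly_Mapping.lookup p x) xs)"
  by (induction xs) (auto simp: lookup_add)

lemma lookup_decode: "Poly_Mapping.lookup (decode_elem n) (int k) = int (Ppos n k) - int (Pneg n k)"
proof -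
  define pos where "pos = (\<lambda>a. if pfst a = 2 * k \<and> even (psnd a) then psnd a div 2 else 0)"
  define neg where "neg = (\<lambda>a. if pfst a = 2 * k \<and> odd (psnd a) then Suc (psnd a div 2) else 0)"
  have e: "Poly_Mapping.lookup (case prod_decode a of (i, v) \<Rightarrow> Poly_Mapping.single (int_decode i) (int_decode v)) (int k)
      = int (pos a) - int (neg a)" for a
  proof -
    have "prod_decode a = (pfst a, psnd a)" by (simp add: pfst_def psnd_def)
    then show ?thesis
      by (simp add: lookup_single when_def int_decode_eq_int) (auto simp: int_decode_alt pos_def neg_def)
  qed
  have "Poly_Mapping.lookup (decode_elem n) (int k) = sum_list (map (\<lambda>a. int (pos a) - int (neg a)) (list_decode n))"
    unfolding decode_elem_def lookup_sum_list by (simp add: e comp_def)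
  also have "\<dots> = int (sum_list (map pos (list_decode n))) - int (sum_list (map neg (list_decode n)))"
    by (simp add: sum_list_subtractf sum_list_of_nat[symmetric] comp_def)
  also have "\<dots> = int (Ppos n k) - int (Pneg n k)"
    by (simp add: sum_list_code Ppos_def Pneg_def pos_def neg_def)
  finally show ?thesis .
qed




abbreviation lk :: "(int \<Rightarrow>\<^sub>0 int) \<Rightarrow> int \<Rightarrow> int" where "lk \<equiv> Poly_Mapping.lookup"

definition Aset :: "(int \<Rightarrow>\<^sub>0 int) set" where
  "Aset = {w. lk w 2 = 1 \<and> (Check (pfst (nat (lk w 1))) (psnd (nat (lk w 1))) \<longrightarrow>
              lk w (int (pfst (nat (lk w 1))) + 5) = 0)}"

definition Jset :: "(int \<Rightarrow>\<^sub>0 int) set" where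
  "Jset = Aset \<union> uminus ` Aset"

definition inA :: "(nat \<Rightarrow> nat) \<Rightarrow> (nat \<Rightarrow> nat) \<Rightarrow> bool" where
  "inA P N \<longleftrightarrow> P 2 = N 2 + 1 \<and> (Check_code (pfst (P 1 - N 1)) (psnd (P 1 - N 1)) \<longrightarrow>
      P (pfst (P 1 - N 1) + 5) = N (pfst (P 1 - N 1) + 5))"

lemma mem_uminus_image: "(x :: 'a :: group_add) \<in> uminus ` S \<longleftrightarrow> - x \<in> S"
proof
  assume "x \<in> uminus ` S" then show "- x \<in> S" by auto
next
  assume "- x \<in> S" then show "x \<in> uminus ` S" by (rule image_eqI[rotated]) simp
qed

lemma inA_iff:
  assumes H: "\<And>k. lk w (int k) = int (P k) - int (N k)"
  shows "w \<in> Aset \<longleftrightarrow> inA P N"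
proof -
  have h2: "lk w 2 = int (P 2) - int (N 2)" using H[of 2] by simp
  have h1: "nat (lk w 1) = P 1 - N 1" using H[of 1] by simp
  have h5: "lk w (int p + 5) = int (P (p + 5)) - int (N (p + 5))" for p
    using H[of "p + 5"] by simp
  show ?thesis unfolding Aset_def inA_def mem_Collect_eq h1 h5 h2 Check_code_eq by linarith
qed

lemma mem_J_code: "decode_elem n \<in> Jset \<longleftrightarrow> inA (Ppos n) (Pneg n) \<or> inA (Pneg n) (Ppos n)"
proof -
  have a: "decode_elem n \<in> Aset \<longleftrightarrow> inA (Ppos n) (Pneg n)"
    by (rule inA_iff) (rule lookup_decode)
  have b: "- decode_elem n \<in> Aset \<longleftrightarrow> inA (Pneg n) (Ppos n)"
    by (rule inA_iff) (simp add: lookup_decode)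
  show ?thesis unfolding Jset_def using a b mem_uminus_image by blast
qed

declare cmpP_Check [ci]

lemma rec_of_cmpP: assumes "cmpP 1 (\<lambda>v. Q (v 0))" shows "recursive_set {n. Q n}"
proof -
  obtain r where r: "\<forall>xs. length xs = 1 \<longrightarrow> eval_recf r xs (if Q (pad 1 xs 0) then 1 else 0)"
    using assms unfolding cmpP_def cmp_def by auto
  show ?thesis unfolding recursive_set_def
  proof (intro exI allI)
    fix n show "eval_recf r [n] (if n \<in> {n. Q n} then 1 else 0)"
      using r[rule_format, of "[n]"] by (simp add: pad_def)
  qed
qed

lemma J_rec: "recursive_set {n. decode_elem n \<in> Jset}"
proof -
  have "cmpP 1 (\<lambda>v. inA (Ppos (v 0)) (Pneg (v 0)) \<or> inA (Pneg (v 0)) (Ppos (v 0)))"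
    unfolding inA_def by (intro ci; simp)
  then show ?thesis unfolding mem_J_code by (rule rec_of_cmpP)
qed

lemma rec_comp: assumes S: "recursive_set S" and R: "cmp 1 (\<lambda>v. R (v 0))"
  shows "recursive_set {e. R e \<in> S}"
proof -
  obtain rs where rs: "\<forall>n. eval_recf rs [n] (if n \<in> S then 1 else 0)" using S recursive_set_def by auto
  obtain rr where rr: "\<forall>xs. length xs = 1 \<longrightarrow> eval_recf rr xs (R (pad 1 xs 0))" using R cmp_def by auto
  show ?thesis unfolding recursive_set_def
  proof (intro exI allI)
    fix e
    have h1: "list_all2 (\<lambda>g y. eval_recf g [e] y) [rr] [R e]" using rr[rule_format, of "[e]"] by (simp add: pad_def)
    have h2: "eval_recf rs [R e] (if R e \<in> S then 1 else 0)" using rs by blast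
    have "eval_recf (Cnf rs [rr]) [e] (if R e \<in> S then 1 else 0)" by (rule eval_recf.comp[OF h1 h2])
    then show "eval_recf (Cnf rs [rr]) [e] (if e \<in> {e. R e \<in> S} then 1 else 0)" by simp
  qed
qed

lemma not_rec_D: "\<not> recursive_set {e. \<exists>t. Check e t}"
proof
  assume "recursive_set {e. \<exists>t. Check e t}"
  then obtain f where f: "\<forall>n. eval_recf f [n] (if n \<in> {e. \<exists>t. Check e t} then 1 else 0)"
    unfolding recursive_set_def by auto
  have fe: "eval_recf f [enc f] (if \<exists>t. Check (enc f) t then 1 else 0)" using f by simp
  show False
  proof (cases "\<exists>t. Check (enc f) t")
    case True
    then have a: "eval_recf f [enc f] 0" using diag by blast
    have b: "eval_recf f [enc f] 1" using fe True by simp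
    show False using eval_det[OF a b] by simp
  next
    case False
    then have "eval_recf f [enc f] 0" using fe by simp
    then show False using diag False by blast
  qed
qed

definition delta :: "nat \<Rightarrow> (int \<Rightarrow>\<^sub>0 int)" where
  "delta e = Poly_Mapping.single (int e + 5) 1"

lemma lk_delta: "lk (delta e) x = (if x = int e + 5 then 1 else 0)"
  by (auto simp: delta_def lookup_single when_def)

lemma delta_nz: "delta e \<noteq> 0"
proof
  assume "delta e = 0"
  then have "lk (delta e) (int e + 5) = 0" by simp
  then show False by (simp add: lk_delta)
qed

lemma shiftA:
  assumes nD: "\<not> (\<exists>t. Check e t)"
  shows "h \<in> Aset \<longleftrightarrow> h + delta e \<in> Aset"
proof -
  have L: "lk (h + delta e) x = lk h x + (if x = int e + 5 then 1 else 0)" for x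
    by (simp add: lookup_add lk_delta)
  have L1: "lk (h + delta e) 1 = lk h 1" and L2: "lk (h + delta e) 2 = lk h 2" using L by auto
  define p where "p = nat (lk h 1)"
  have "Check (pfst p) (psnd p) \<Longrightarrow> lk (h + delta e) (int (pfst p) + 5) = lk h (int (pfst p) + 5)"
  proof -
    assume "Check (pfst p) (psnd p)"
    then have "pfst p \<noteq> e" using nD by blast
    then show ?thesis using L by simp
  qed
  then show ?thesis unfolding Aset_def mem_Collect_eq L1 L2 p_def[symmetric] by auto
qed

lemma shiftJ:
  assumes nD: "\<not> (\<exists>t. Check e t)"
  shows "h \<in> Jset \<longleftrightarrow> h + delta e \<in> Jset"
proof -
  have "-h \<in> Aset \<longleftrightarrow> - (h + delta e) \<in> Aset"
    using shiftA[OF nD, of "- (h + delta e)"] by (simp add: algebra_simps)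
  then show ?thesis unfolding Jset_def using shiftA[OF nD, of h] mem_uminus_image by blast
qed

lemma reduce: "(\<exists>g. odd (card ((\<lambda>x. x - g) ` {0, delta e} \<inter> Jset))) \<longleftrightarrow> (\<exists>t. Check e t)"
proof
  assume "\<exists>g. odd (card ((\<lambda>x. x - g) ` {0, delta e} \<inter> Jset))"
  then obtain g where g: "odd (card ((\<lambda>x. x - g) ` {0, delta e} \<inter> Jset))" by blast
  show "\<exists>t. Check e t"
  proof (rule ccontr)
    assume nD: "\<not> (\<exists>t. Check e t)"
    have im: "(\<lambda>x. x - g) ` {0, delta e} = {-g, -g + delta e}" by (simp add: algebra_simps)
    have ne: "-g \<noteq> -g + delta e" using delta_nz by simp
    have sh: "-g \<in> Jset \<longleftrightarrow> -g + delta e \<in> Jset" using shiftJ[OF nD] by blast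
    show False
    proof (cases "-g \<in> Jset")
      case True
      then have "(\<lambda>x. x - g) ` {0, delta e} \<inter> Jset = {-g, -g + delta e}" using im sh by auto
      then show False using g ne by simp
    next
      case False
      then have "(\<lambda>x. x - g) ` {0, delta e} \<inter> Jset = {}" using im sh by auto
      then show False using g by simp
    qed
  qed
next
  assume "\<exists>t. Check e t"
  then obtain t where t: "Check e t" by blast
  define p where "p = pe e t"
  define w0 :: "int \<Rightarrow>\<^sub>0 int" where "w0 = Poly_Mapping.single 2 1 + Poly_Mapping.single 1 (int p)"
  have lw0: "lk w0 x = (if x = 2 then 1 else 0) + (if x = 1 then int p else 0)" for x
    by (auto simp: w0_def lookup_add lookup_single when_def)
  have w0A: "w0 \<in> Aset"
    unfolding Aset_def using t by (simp add: lw0 p_def)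
  have w1A: "w0 + delta e \<notin> Aset"
    unfolding Aset_def using t by (simp add: lw0 p_def lookup_add lk_delta)
  have w1B: "w0 + delta e \<notin> uminus ` Aset"
    unfolding mem_uminus_image Aset_def by (simp add: lw0 lookup_add lookup_minus lk_delta)
  have im: "(\<lambda>x. x - (- w0)) ` {0, delta e} = {w0, w0 + delta e}" by (simp add: algebra_simps)
  have "(\<lambda>x. x - (- w0)) ` {0, delta e} \<inter> Jset = {w0}"
    unfolding im Jset_def using w0A w1A w1B by auto
  then show "\<exists>g. odd (card ((\<lambda>x. x - g) ` {0, delta e} \<inter> Jset))" by (intro exI[of _ "- w0"]) simp
qed

definition ne :: "nat \<Rightarrow> nat" where
  "ne e = lcons 0 (lcons (lcons (pe (2 * e + 10) 2) 0) 0)"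

lemma decode_fset_ne: "decode_fset (ne e) = {0, delta e}"
proof -
  have l: "ne e = list_encode [0, list_encode [pe (2 * e + 10) 2]]"
    by (simp add: ne_def lcons_def pe_def)
  have d0: "decode_elem 0 = 0" by (simp add: decode_elem_def)
  have d1: "decode_elem (list_encode [pe (2 * e + 10) 2]) = delta e"
  proof -
    have "prod_decode (pe (2 * e + 10) 2) = (2 * e + 10, 2)" by (simp add: pe_def)
    moreover have "int_decode (2 * e + 10) = int e + 5" by (simp add: int_decode_alt)
    moreover have "int_decode 2 = 1" by (simp add: int_decode_alt)
    ultimately show ?thesis by (simp add: decode_elem_def delta_def)
  qed
  show ?thesis unfolding decode_fset_def l using d0 d1 by simp
qed

lemma cmp_ne: "cmp 1 (\<lambda>v. ne (v 0))"
  unfolding ne_def by (intro ci; simp)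

theorem mainTheorem3:
  shows "\<exists>J :: (int \<Rightarrow>\<^sub>0 int) set.
     recursive_set {n. decode_elem n \<in> J} \<and> 0 \<notin> J \<and> uminus ` J = J \<and>
     \<not> recursive_set {n. \<exists>g :: int \<Rightarrow>\<^sub>0 int.
          odd (card ((\<lambda>x. x - g) ` decode_fset n \<inter> J))}"
proof (intro exI conjI)
  show "recursive_set {n. decode_elem n \<in> Jset}" by (rule J_rec)
  show "0 \<notin> Jset" unfolding Jset_def by (simp add: mem_uminus_image Aset_def)
  show "uminus ` Jset = Jset" unfolding Jset_def by (simp add: image_Un image_image Un_commute)
  show "\<not> recursive_set {n. \<exists>g. odd (card ((\<lambda>x. x - g) ` decode_fset n \<inter> Jset))}"
  proof
    assume "recursive_set {n. \<exists>g. odd (card ((\<lambda>x. x - g) ` decode_fset n \<inter> Jset))}"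
    then have "recursive_set {e. ne e \<in> {n. \<exists>g. odd (card ((\<lambda>x. x - g) ` decode_fset n \<inter> Jset))}}"
      using cmp_ne by (rule rec_comp)
    moreover have "{e. ne e \<in> {n. \<exists>g. odd (card ((\<lambda>x. x - g) ` decode_fset n \<inter> Jset))}} = {e. \<exists>t. Check e t}"
      using reduce by (simp add: decode_fset_ne)
    ultimately show False using not_rec_D by simp
  qed
qed


end
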